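(* Let $b>0$, $p_0>0$, and let $(p_\ell)_{\ell\ge1}$ be a probability distribution on $\{1,2,\dots\}$ with $p_\ell\ell^2\to p_0$ as $\ell\to\infty$. Let $k,j\in\mathbb N$ with $k\ge j\ge2$ and let $c_0>0$. For $K>1$ and $n\ge c_0/2$ define \[R_j(K,n)=K\log(K)\,nb\sum_{\ell\ge j-1}p_\ell\,\frac{\binom{K\log(K)n+\ell-k}{\ell+1-j}}{\binom{K\log(K)n+\ell}{\ell+1}},\qquad R_j=\int_0^1u^j(1-u)^{k-j}\frac{bp_0}{u^2}\,du.\] Then $R_j(K,n)\to R_j$ as $K\to\infty$, uniformly in $n\ge c_0/2$.
   Context: Binomial coefficients with non-integer upper argument are understood in the generalized sense $\binom{x}{r}=\frac{x(x-1)\cdots(x-r+1)}{r!}$ (equivalently via Gamma functions), for real $x$ and nonnegative integer $r$. *)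

theory Defs
  imports "HOL-Analysis.Analysis"
begin

definition Rjn :: "(nat \<Rightarrow> real) \<Rightarrow> real \<Rightarrow> nat \<Rightarrow> nat \<Rightarrow> real \<Rightarrow> real \<Rightarrow> real" where
  "Rjn p b k j K n =
     K * ln K * n * b *
     (\<Sum>i. (let l = i + (j - 1) in
        p l * (((K * ln K * n + real l - real k) gchoose (l + 1 - j))
               / ((K * ln K * n + real l) gchoose (l + 1)))))"

definition Rj :: "real \<Rightarrow> real \<Rightarrow> nat \<Rightarrow> nat \<Rightarrow> real" where
  "Rj b p0 k j = integral {0..1} (\<lambda>u. u ^ j * (1 - u) ^ (k - j) * (b * p0 / u\<^sup>2))"

end

theory Submission imports Defs "HOL-Real_Asymp.Real_Asymp" begin


definition ff :: "real \<Rightarrow> nat \<Rightarrow> real" where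
  "ff y n = (\<Prod>i<n. y - real i)"

lemma ff_0[simp]: "ff y 0 = 1" by (simp add: ff_def)

lemma ff_Suc2: "ff y (Suc n) = ff y n * (y - real n)"
  by (simp add: ff_def)

lemma ff_Suc1: "ff y (Suc n) = y * ff (y - 1) n"
  unfolding ff_def prod.lessThan_Suc_shift by (simp add: algebra_simps)

lemma ff_add: "ff y (m + n) = ff y m * ff (y - real m) n"
  by (induction n) (auto simp: ff_Suc2 algebra_simps)

lemma ff_self: "ff (real n) n = fact n"
  by (induction n) (auto simp: ff_Suc1 fact_Suc)

lemma ff_pos: "y > real n - 1 \<Longrightarrow> ff y n > 0"
  unfolding ff_def by (intro prod_pos) auto

lemma ff_ge: assumes "n \<ge> 1" "y \<ge> real n" shows "ff y n \<ge> y - real n + 1"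
proof -
  obtain m where n: "n = Suc m" using assms by (cases n) auto
  have "ff y m \<ge> 1" unfolding ff_def using assms n by (intro prod_ge_1) auto
  moreover have "y - real m \<ge> 0" using assms n by auto
  ultimately have "ff y m * (y - real m) \<ge> 1 * (y - real m)"
    by (intro mult_right_mono) auto
  thus ?thesis using n by (simp add: ff_Suc2)
qed

lemma ff_mono: assumes "y > real n - 1" "y \<le> z" shows "ff y n \<le> ff z n"
  unfolding ff_def using assms by (intro prod_mono) auto

lemma gchoose_ff: "a gchoose n = ff a n / fact n"
  by (simp add: gbinomial_prod_rev ff_def atLeast0LessThan)



lemma series_base:
  assumes "2 \<le> k" "x > real k - 1"
  shows "(\<lambda>m. ff (real m) 0 / ff (x + real m) k) sums (fact 0 * fact (k-2-0) / fact (k-1) / ff (x-1) (k-1-0))"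
proof -
  obtain K1 where k: "k = Suc K1" and K1: "K1 \<ge> 1" using assms by (cases k) auto
  define f where "f m = 1 / (real K1 * ff (x + real m - 1) K1)" for m
  have eq: "f m - f (Suc m) = ff (real m) 0 / ff (x + real m) k" for m
  proof -
    define A where "A = ff (x + real m - 1) K1"
    define B where "B = ff (x + real m) K1"
    have A: "A > 0" unfolding A_def using assms k by (intro ff_pos) auto
    have B: "B > 0" unfolding B_def using assms k by (intro ff_pos) auto
    have P1: "ff (x + real m) k = (x + real m) * A" unfolding A_def k ff_Suc1 by simp
    have P2: "ff (x + real m) k = B * (x + real m - K1)" unfolding B_def k ff_Suc2 by simp
    have xm: "x + real m > 0" "x + real m - K1 > 0" using assms k by auto
    have "f m - f (Suc m) = 1/(K1*A) - 1/(K1*B)" unfolding f_def A_def B_def by (simp add: add.commute add.left_commute)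
    also have "\<dots> = (B - A) / (K1 * A * B)" using A B K1 by (simp add: field_simps)
    also have "B - A = K1 * A * B / ff (x + real m) k"
    proof -
      have hA: "A = ff (x + real m) k / (x + real m)" and hB: "B = ff (x + real m) k / (x + real m - K1)"
        using P1 P2 xm by (auto simp: field_simps)
      have ne: "x + real m \<noteq> 0" "x + real m - K1 \<noteq> 0" using xm by auto
      have "B - A = ff (x + real m) k * K1 / ((x + real m) * (x + real m - K1))"
        unfolding hA hB using ne by (simp add: field_simps)
      moreover have "K1 * A * B / ff (x + real m) k = ff (x + real m) k * K1 / ((x + real m) * (x + real m - K1))"
      proof -
        have Ppos: "ff (x + real m) k > 0" using assms by (intro ff_pos) auto
        have gen: "c * (P / y) * (P / z) / P = P * c / (y * z)" if "P > 0" for c P y z :: real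
          using that by (simp add: field_simps power2_eq_square)
        show ?thesis unfolding hA hB using gen[OF Ppos] by simp
      qed
      ultimately show ?thesis by simp
    qed
    finally show ?thesis using A B K1 by simp
  qed
  have lim: "f \<longlonglongrightarrow> 0"
  proof (rule tendsto_sandwich[of "\<lambda>_. 0" _ _ "\<lambda>m. 1 / (real K1 * (x + real m - K1))"])
    show "\<forall>\<^sub>F m in sequentially. 0 \<le> f m"
    proof (intro always_eventually allI)
      fix m have "ff (x + real m - 1) K1 > 0" using assms k by (intro ff_pos) auto
      thus "0 \<le> f m" unfolding f_def by simp
    qed
    have "\<forall>\<^sub>F m in sequentially. real m \<ge> real K1 + 1" by real_asymp
    thus "\<forall>\<^sub>F m in sequentially. f m \<le> 1 / (real K1 * (x + real m - K1))"
    proof eventually_elim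
      case (elim m)
      have "ff (x + real m - 1) K1 \<ge> x + real m - 1 - K1 + 1" using K1 elim assms k by (intro ff_ge) auto
      moreover have "x + real m - K1 > 0" using elim assms k by auto
      ultimately show ?case unfolding f_def using K1
        by (intro divide_left_mono mult_left_mono mult_pos_pos) auto
    qed
    show "(\<lambda>m. 1 / (real K1 * (x + real m - real K1))) \<longlonglongrightarrow> 0" using K1 by real_asymp
  qed simp
  have "(\<lambda>m. f m - f (Suc m)) sums (f 0 - 0)" by (rule telescope_sums'[OF lim])
  moreover have "f 0 = fact 0 * fact (k-2-0) / fact (k-1) / ff (x-1) (k-1-0)"
    using k K1 unfolding f_def by (cases K1) (auto simp: fact_Suc divide_simps)
  ultimately show ?thesis using eq by simp
qed

lemma gen_alg:
  fixes A B G F x s t :: real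
  assumes "G > 0" "F > 0" "x > 0" "s \<ge> 0" "t \<ge> 0"
  shows "A * B / ((s + t + 1) * G) / F - x * (A * ((t + 1) * B) / ((s + t + 2) * ((s + t + 1) * G)) / (x * F))
     = (s + 1) * A * B / ((s + t + 2) * ((s + t + 1) * G)) / F"
proof -
  define D where "D = (s + t + 2) * ((s + t + 1) * G)"
  have D: "D > 0" unfolding D_def using assms by auto
  have 1: "x * (P / D / (x * F)) = P / D / F" for P using assms by simp
  have 2: "A * B / ((s + t + 1) * G) / F = (s + t + 2) * A * B / D / F"
    unfolding D_def using assms by simp
  show ?thesis unfolding D_def[symmetric] 1 2 by (simp add: diff_divide_distrib[symmetric] algebra_simps)
qed
lemma series_id:
  "a + 2 \<le> k \<Longrightarrow> x > real k - 1 \<Longrightarrow>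
   (\<lambda>m. ff (real m) a / ff (x + real m) k) sums (fact a * fact (k-2-a) / fact (k-1) / ff (x-1) (k-1-a))"
proof (induction a arbitrary: k x)
  case 0
  then show ?case using series_base[of k x] by simp
next
  case (Suc a)
  obtain d where k: "k = d + a + 3" using Suc.prems by (intro that[of "k - a - 3"]) auto
  have x: "x > real d + real a + 2" using Suc.prems k by auto
  have IH1: "(\<lambda>m. ff (real m) a / ff (x + real m) (d + a + 2)) sums
      (fact a * fact d / fact (d+a+1) / ff (x-1) (Suc d))"
    using Suc.IH[of "d + a + 2" x] x by (auto simp: numeral_2_eq_2 add.commute add.left_commute)
  have IH2: "(\<lambda>m. ff (real m) a / ff (x + 1 + real m) (d + a + 3)) sums
      (fact a * fact (Suc d) / fact (d+a+2) / ff x (Suc (Suc d)))"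
    using Suc.IH[of "d + a + 3" "x+1"] x by (auto simp: numeral_2_eq_2 numeral_3_eq_3 add.commute add.left_commute)
  define g where "g m = ff (real m) (Suc a) / ff (x + real m) k" for m
  have geq: "g (Suc m) = ff (real m) a / ff (x + real m) (d + a + 2) - x * (ff (real m) a / ff (x + 1 + real m) (d + a + 3))" for m
  proof -
    have e1: "ff (real (Suc m)) (Suc a) = (real m + 1) * ff (real m) a" by (simp add: ff_Suc1)
    have e2: "ff (x + real (Suc m)) k = (x + real m + 1) * ff (x + real m) (d + a + 2)"
      unfolding k by (simp add: numeral_3_eq_3 ff_Suc1 add.commute add.left_commute)
    have e3: "ff (x + 1 + real m) (d + a + 3) = (x + real m + 1) * ff (x + real m) (d + a + 2)"
      by (simp add: numeral_3_eq_3 ff_Suc1 add.commute add.left_commute)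
    have D: "ff (x + real m) (d + a + 2) > 0" using x by (intro ff_pos) auto
    have xm: "x + real m + 1 > 0" using x by auto
    have gen: "(y + 1) * F / ((x + y + 1) * D') = F / D' - x * (F / ((x + y + 1) * D'))"
      if "D' > 0" "x + y + 1 > 0" for F D' y :: real
    proof -
      have "F / D' = (x + y + 1) * F / ((x + y + 1) * D')" using that by simp
      hence "F / D' - x * (F / ((x + y + 1) * D')) = ((x + y + 1) * F - x * F) / ((x + y + 1) * D')"
        by (simp add: diff_divide_distrib)
      also have "(x + y + 1) * F - x * F = (y + 1) * F" by algebra
      finally show ?thesis by simp
    qed
    show ?thesis unfolding g_def e1 e2 e3 using gen[OF D, of "real m"] xm by (simp add: add.commute add.left_commute)
  qed
  have g0: "g 0 = 0" by (simp add: g_def ff_Suc1)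
  have "(\<lambda>m. g (Suc m)) sums (fact a * fact d / fact (d+a+1) / ff (x-1) (Suc d) -
      x * (fact a * fact (Suc d) / fact (d+a+2) / ff x (Suc (Suc d))))"
    unfolding geq by (intro sums_diff sums_mult IH1 IH2)
  hence "g sums (fact a * fact d / fact (d+a+1) / ff (x-1) (Suc d) -
      x * (fact a * fact (Suc d) / fact (d+a+2) / ff x (Suc (Suc d))))"
    using sums_Suc_iff[of g] g0 by simp
  moreover have "fact a * fact d / fact (d+a+1) / ff (x-1) (Suc d) -
      x * (fact a * fact (Suc d) / fact (d+a+2) / ff x (Suc (Suc d))) =
      fact (Suc a) * fact (k-2-Suc a) / fact (k-1) / ff (x-1) (k-1-Suc a)"
  proof -
    have F: "ff (x-1) (Suc d) > 0" using x by (intro ff_pos) auto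
    have x0: "x > 0" using x by auto
    have e: "ff x (Suc (Suc d)) = x * ff (x-1) (Suc d)" by (simp add: ff_Suc1)
    have k1: "k - 2 - Suc a = d" "k - 1 - Suc a = Suc d" "k - 1 = Suc (Suc (d + a))" using k by auto
    have f1: "(fact (d+a+1) :: real) = (real a + real d + 1) * fact (a + d)"
      by (simp add: fact_Suc add.commute add.left_commute)
    have f2: "(fact (d+a+2) :: real) = (real a + real d + 2) * ((real a + real d + 1) * fact (a + d))"
      by (simp add: fact_Suc numeral_2_eq_2 add.commute add.left_commute)
    have f3: "(fact (Suc (Suc (d + a))) :: real) = (real a + real d + 2) * ((real a + real d + 1) * fact (a + d))"
      by (simp add: fact_Suc add.commute add.left_commute)
    have f4: "(fact (Suc d) :: real) = (real d + 1) * fact d" "(fact (Suc a) :: real) = (real a + 1) * fact a"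
      by (simp_all add: fact_Suc)
    show ?thesis unfolding e k1 f1 f2 f3 f4
      using gen_alg[of "fact (a+d)" "ff (x-1) (Suc d)" x "real a" "real d" "fact a" "fact d"] F x0
      by (simp add: mult.assoc mult.left_commute)
  qed
  ultimately show ?case unfolding g_def by simp
qed



lemma toeplitz:
  fixes W :: "real \<Rightarrow> nat \<Rightarrow> real" and Q :: "nat \<Rightarrow> real"
  assumes ev: "eventually (\<lambda>N. W N sums C \<and> (\<forall>i. W N i \<ge> 0)) at_top"
    and W0: "\<And>i. ((\<lambda>N. W N i) \<longlongrightarrow> 0) at_top"
    and Q: "Q \<longlonglongrightarrow> q"
  shows "((\<lambda>N. suminf (\<lambda>i. Q i * W N i)) \<longlongrightarrow> q * C) at_top"
proof (rule tendstoI)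
  fix \<epsilon> :: real assume \<epsilon>: "\<epsilon> > 0"
  obtain M where M: "\<And>i. norm (Q i) \<le> M" using convergent_imp_Bseq[OF convergentI[OF Q]] unfolding Bseq_def by auto
  define B where "B = M + \<bar>q\<bar>"
  have B: "\<bar>Q i - q\<bar> \<le> B" for i using M[of i] unfolding B_def by auto
  have B0: "B \<ge> 0" using B[of 0] by linarith
  define e1 where "e1 = \<epsilon> / (2 * (\<bar>C\<bar> + 1))"
  have e1: "e1 > 0" unfolding e1_def using \<epsilon> by auto
  have "\<forall>\<^sub>F i in sequentially. dist (Q i) q < e1" using tendstoD[OF Q e1] .
  then obtain L where L: "\<And>i. i \<ge> L \<Longrightarrow> \<bar>Q i - q\<bar> < e1"
    unfolding eventually_sequentially dist_real_def by blast
  define e2 where "e2 = \<epsilon> / (2 * (B + 1) * (real L + 1))"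
  have e2: "e2 > 0" unfolding e2_def using \<epsilon> B0 by auto
  have evW: "\<forall>\<^sub>F N in at_top. \<forall>i\<in>{..<L}. W N i < e2"
  proof (rule eventually_ball_finite)
    show "\<forall>i\<in>{..<L}. \<forall>\<^sub>F N in at_top. W N i < e2"
    proof
      fix i show "\<forall>\<^sub>F N in at_top. W N i < e2"
        using tendstoD[OF W0[of i] e2] by (rule eventually_mono) (auto simp: dist_real_def)
    qed
  qed simp
  show "\<forall>\<^sub>F N in at_top. dist (\<Sum>i. Q i * W N i) (q * C) < \<epsilon>"
    using ev evW
  proof eventually_elim
    case (elim N)
    hence WC: "W N sums C" and Wnn: "\<And>i. W N i \<ge> 0" and Wsm: "\<And>i. i < L \<Longrightarrow> W N i < e2" by auto
    have C0: "C \<ge> 0" using sums_le[OF _ sums_zero WC] Wnn by auto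
    define g where "g i = B * (if i < L then W N i else 0) + e1 * W N i" for i
    have gs: "g sums (B * (\<Sum>i<L. W N i) + e1 * C)"
    proof -
      have "(\<lambda>i. if i < L then W N i else 0) sums (\<Sum>i<L. if i < L then W N i else 0)"
        by (rule sums_finite) auto
      hence "(\<lambda>i. if i < L then W N i else 0) sums (\<Sum>i<L. W N i)" by simp
      thus ?thesis unfolding g_def by (intro sums_add sums_mult WC)
    qed
    have fg: "\<bar>(Q i - q) * W N i\<bar> \<le> g i" for i
    proof (cases "i < L")
      case True
      have "\<bar>(Q i - q) * W N i\<bar> = \<bar>Q i - q\<bar> * W N i" using Wnn[of i] by (simp add: abs_mult)
      also have "\<dots> \<le> B * W N i" using B[of i] Wnn[of i] by (intro mult_right_mono) auto
      also have "\<dots> \<le> g i" using True e1 Wnn[of i] unfolding g_def by auto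
      finally show ?thesis .
    next
      case False
      have "\<bar>(Q i - q) * W N i\<bar> = \<bar>Q i - q\<bar> * W N i" using Wnn[of i] by (simp add: abs_mult)
      also have "\<dots> \<le> e1 * W N i" using L[of i] False Wnn[of i] by (intro mult_right_mono) auto
      also have "\<dots> = g i" using False unfolding g_def by auto
      finally show ?thesis .
    qed
    have sD: "summable (\<lambda>i. (Q i - q) * W N i)"
      by (rule summable_comparison_test[of _ g]) (use fg sums_summable[OF gs] in auto)
    define D where "D = (\<Sum>i. (Q i - q) * W N i)"
    have Ds: "(\<lambda>i. (Q i - q) * W N i) sums D" unfolding D_def using sD by (rule summable_sums)
    have "(\<lambda>i. (Q i - q) * W N i + q * W N i) sums (D + q * C)"
      by (intro sums_add sums_mult Ds WC)
    hence sumeq: "(\<Sum>i. Q i * W N i) = D + q * C"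
      by (simp add: algebra_simps sums_iff)
    have "D \<le> B * (\<Sum>i<L. W N i) + e1 * C" using fg by (intro sums_le[OF _ Ds gs]) (auto simp: abs_le_iff)
    moreover have "- D \<le> B * (\<Sum>i<L. W N i) + e1 * C"
      using fg by (intro sums_le[OF _ sums_minus[OF Ds] gs]) (auto simp: abs_le_iff)
    moreover have "B * (\<Sum>i<L. W N i) \<le> B * (real L * e2)"
    proof (intro mult_left_mono B0)
      have "(\<Sum>i<L. W N i) \<le> (\<Sum>i<L. e2)" using Wsm by (intro sum_mono) (auto intro: less_imp_le)
      thus "(\<Sum>i<L. W N i) \<le> real L * e2" by simp
    qed
    moreover have "B * (real L * e2) < \<epsilon> / 2"
    proof -
      have "B * (real L * e2) = \<epsilon> / 2 * (B / (B + 1)) * (real L / (real L + 1))"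
        unfolding e2_def using B0 by (simp add: field_simps)
      also have "\<dots> < \<epsilon> / 2 * 1 * 1"
      proof -
        have "B / (B + 1) < 1" "real L / (real L + 1) < 1" using B0 by auto
        moreover have "B / (B + 1) \<ge> 0" "real L / (real L + 1) \<ge> 0" using B0 by auto
        ultimately show ?thesis using \<epsilon> by (intro mult_strict_left_mono mult_strict_mono) auto
      qed
      finally show ?thesis by simp
    qed
    moreover have "e1 * C < \<epsilon> / 2"
    proof -
      have "e1 * C = \<epsilon> / 2 * (C / (C + 1))" unfolding e1_def using C0 by (simp add: field_simps)
      also have "\<dots> < \<epsilon> / 2 * 1" using C0 \<epsilon> by (intro mult_strict_left_mono) auto
      finally show ?thesis by simp
    qed
    ultimately show ?case unfolding sumeq dist_real_def by auto
  qed
qed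



lemma Rj_value:
  assumes "k \<ge> j" "j \<ge> 2"
  shows "Rj b p0 k j = b * p0 * (fact (j-2) * fact (k-j) / fact (k-1))"
proof -
  have hB: "((\<lambda>t. t powr (real j - 1 - 1) * (1 - t) powr (real (k-j) + 1 - 1)) has_integral
        Beta (real j - 1) (real (k-j) + 1)) {0..1}"
    using assms by (intro has_integral_Beta_real) auto
  have Bv: "Beta (real j - 1) (real (k-j) + 1) = fact (j-2) * fact (k-j) / fact (k-1)"
  proof -
    have "Gamma (real j - 1) = fact (j-2)" using Gamma_fact[of "j-2"] assms by (simp add: of_nat_diff)
    moreover have "Gamma (real (k-j) + 1) = fact (k-j)" using Gamma_fact[of "k-j"] by (simp add: add.commute)
    moreover have "Gamma (real j - 1 + (real (k-j) + 1)) = fact (k-1)"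
      using Gamma_fact[of "k-1"] assms by (simp add: of_nat_diff)
    ultimately show ?thesis unfolding Beta_def by simp
  qed
  have "((\<lambda>t. t powr (real j - 1 - 1) * (1 - t) powr (real (k-j) + 1 - 1)) has_integral
        Beta (real j - 1) (real (k-j) + 1)) {0<..<1}"
    using hB by (simp add: has_integral_Icc_iff_Ioo)
  hence "((\<lambda>t. b * p0 * (t powr (real j - 1 - 1) * (1 - t) powr (real (k-j) + 1 - 1))) has_integral
        b * p0 * Beta (real j - 1) (real (k-j) + 1)) {0<..<1}"
    by (rule has_integral_mult_right)
  hence "((\<lambda>u. u ^ j * (1 - u) ^ (k - j) * (b * p0 / u\<^sup>2)) has_integral
        b * p0 * Beta (real j - 1) (real (k-j) + 1)) {0<..<1}"
  proof (rule has_integral_cong[THEN iffD1, rotated])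
    fix u :: real assume u: "u \<in> {0<..<1}"
    have "u powr (real j - 1 - 1) = u ^ (j-2)" using u assms
      by (subst powr_realpow[symmetric]) (auto simp: of_nat_diff)
    moreover have "(1 - u) powr (real (k-j) + 1 - 1) = (1 - u) ^ (k-j)" using u
      by (subst powr_realpow[symmetric]) auto
    moreover have "u ^ j = u ^ (j-2) * u\<^sup>2" using assms by (metis le_add_diff_inverse2 power_add)
    ultimately show "b * p0 * (u powr (real j - 1 - 1) * (1 - u) powr (real (k-j) + 1 - 1)) =
        u ^ j * (1 - u) ^ (k - j) * (b * p0 / u\<^sup>2)" using u by (simp add: field_simps)
  qed
  hence "((\<lambda>u. u ^ j * (1 - u) ^ (k - j) * (b * p0 / u\<^sup>2)) has_integral
        b * p0 * Beta (real j - 1) (real (k-j) + 1)) {0..1}"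
    by (simp add: has_integral_Icc_iff_Ioo)
  thus ?thesis unfolding Rj_def Bv by (rule integral_unique)
qed

lemma ff_zero: "m < n \<Longrightarrow> ff (real m) n = 0"
  unfolding ff_def by (rule prod_zero) auto



definition WW :: "nat \<Rightarrow> nat \<Rightarrow> real \<Rightarrow> nat \<Rightarrow> real" where
  "WW k j N i = N * ff (N-1) (k-j) * (ff (real (i+(j-2))) (j-2) / ff (N + 1 + real (i+(j-2))) k)"

lemma WW_sums:
  assumes "k \<ge> j" "j \<ge> 2" "N > real k"
  shows "WW k j N sums (fact (j-2) * fact (k-j) / fact (k-1))"
proof -
  define a where "a = j - 2"
  have s: "(\<lambda>m. ff (real m) a / ff (N + 1 + real m) k) sums
      (fact a * fact (k-2-a) / fact (k-1) / ff (N + 1 - 1) (k-1-a))"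
    using assms unfolding a_def by (intro series_id) auto
  have s2: "(\<lambda>i. ff (real (i+a)) a / ff (N + 1 + real (i+a)) k) sums
      (fact a * fact (k-2-a) / fact (k-1) / ff (N + 1 - 1) (k-1-a))"
    using s by (subst sums_zero_iff_shift) (auto simp: ff_zero)
  have e: "k-2-a = k-j" "k-1-a = Suc (k-j)" using assms unfolding a_def by auto
  have ffN: "ff N (Suc (k-j)) = N * ff (N-1) (k-j)" by (simp add: ff_Suc1)
  have pos: "ff (N-1) (k-j) > 0" "N > 0" using assms by (auto intro!: ff_pos)
  have "(\<lambda>i. N * ff (N-1) (k-j) * (ff (real (i+a)) a / ff (N + 1 + real (i+a)) k)) sums
      (N * ff (N-1) (k-j) * (fact a * fact (k-2-a) / fact (k-1) / ff (N + 1 - 1) (k-1-a)))"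
    by (intro sums_mult s2)
  also have "N * ff (N-1) (k-j) * (fact a * fact (k-2-a) / fact (k-1) / ff (N + 1 - 1) (k-1-a))
      = fact (j-2) * fact (k-j) / fact (k-1)"
    using pos unfolding e by (simp add: a_def ffN)
  finally show ?thesis unfolding WW_def a_def .
qed

lemma ff_nonneg_nat: "ff (real m) n \<ge> 0"
proof (cases "m < n")
  case True thus ?thesis by (simp add: ff_zero)
next
  case False thus ?thesis unfolding ff_def by (intro prod_nonneg) auto
qed

lemma WW_nonneg:
  assumes "k \<ge> j" "j \<ge> 2" "N > real k"
  shows "WW k j N i \<ge> 0"
proof -
  have "ff (N-1) (k-j) > 0" "ff (N + 1 + real (i+(j-2))) k > 0" using assms by (auto intro!: ff_pos)
  thus ?thesis unfolding WW_def using assms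
    by (intro mult_nonneg_nonneg divide_nonneg_nonneg ff_nonneg_nat) auto
qed

lemma WW_lim:
  assumes "k \<ge> j" "j \<ge> 2"
  shows "((\<lambda>N. WW k j N i) \<longlongrightarrow> 0) at_top"
proof -
  define c where "c = ff (real (i+(j-2))) (j-2)"
  define s where "s = Suc (k-j)"
  have c0: "c \<ge> 0" unfolding c_def by (rule ff_nonneg_nat)
  have ks: "k = s + (j - 1)" unfolding s_def using assms by auto
  show ?thesis
  proof (rule tendsto_sandwich[of "\<lambda>_. 0" _ _ "\<lambda>N. c / (N + 2 + real (i+(j-2)) - real k)"])
    show "\<forall>\<^sub>F N in at_top. 0 \<le> WW k j N i"
      using eventually_gt_at_top[of "real k"] by eventually_elim (use assms WW_nonneg in auto)
    show "\<forall>\<^sub>F N in at_top. WW k j N i \<le> c / (N + 2 + real (i+(j-2)) - real k)"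
      using eventually_gt_at_top[of "real k"]
    proof eventually_elim
      case (elim N)
      define Y where "Y = N + 1 + real (i+(j-2))"
      have Yk: "Y > real k" unfolding Y_def using elim by auto
      have "WW k j N i = c * (ff N s / ff Y k)"
        unfolding WW_def c_def s_def Y_def by (simp add: ff_Suc1)
      also have "ff Y k = ff Y s * ff (Y - real s) (j-1)" unfolding ks by (rule ff_add)
      also have "c * (ff N s / (ff Y s * ff (Y - real s) (j-1))) \<le> c * (1 / (Y - real k + 1))"
      proof (rule mult_left_mono[OF _ c0])
        have p1: "ff N s > 0" using elim ks by (intro ff_pos) auto
        have p2: "ff N s \<le> ff Y s" using elim ks unfolding Y_def by (intro ff_mono) auto
        have p3: "ff (Y - real s) (j-1) \<ge> Y - real s - real (j-1) + 1"
          using assms Yk ks by (intro ff_ge) auto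
        have p3': "Y - real s - real (j-1) + 1 = Y - real k + 1" using ks assms by simp
        have p4: "Y - real k + 1 > 0" using Yk by auto
        have "ff N s / (ff Y s * ff (Y - real s) (j-1)) \<le> 1 / ff (Y - real s) (j-1)"
          using p1 p2 p3 p4 p3' by (simp add: field_simps)
        also have "\<dots> \<le> 1 / (Y - real k + 1)" using p3 p3' p4 by (intro divide_left_mono) auto
        finally show "ff N s / (ff Y s * ff (Y - real s) (j-1)) \<le> 1 / (Y - real k + 1)" .
      qed
      also have "c * (1 / (Y - real k + 1)) = c / (N + 2 + real (i+(j-2)) - real k)"
        unfolding Y_def by simp
      finally show ?case .
    qed
    show "((\<lambda>N. c / (N + 2 + real (i+(j-2)) - real k)) \<longlongrightarrow> 0) at_top" by real_asymp
  qed simp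
qed



lemma term_eq:
  assumes "k \<ge> j" "j \<ge> 2" "N > real k"
  shows "N * (let l = i + (j - 1) in p l * (((N + real l - real k) gchoose (l + 1 - j)) / ((N + real l) gchoose (l + 1))))
     = (p (i+(j-1)) * real (i+(j-1)) * (real (i+(j-1)) + 1)) * WW k j N i"
proof -
  define l where "l = i + (j - 1)"
  define A where "A = N + real l - real k"
  define B where "B = N + real l"
  have li: "l + 1 - j = i" "l + 1 = i + j" unfolding l_def using assms by auto
  have F1: "(fact (l+1) :: real) = ff (real (l+1)) j * fact i"
  proof -
    have "ff (real (l+1)) (j + i) = ff (real (l+1)) j * ff (real (l+1) - real j) i" by (rule ff_add)
    moreover have "real (l+1) - real j = real i" using li by (simp add: of_nat_diff)
    moreover have "j + i = l + 1" using li by simp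
    ultimately have "ff (real (l+1)) (l+1) = ff (real (l+1)) j * ff (real i) i" by metis
    thus ?thesis unfolding ff_self by simp
  qed
  have F2: "ff B k * ff A i = ff B (l+1) * ff (N-1) (k-j)"
  proof -
    have "ff B (k + i) = ff B k * ff (B - real k) i" by (rule ff_add)
    moreover have "ff B ((l+1) + (k-j)) = ff B (l+1) * ff (B - real (l+1)) (k-j)" by (rule ff_add)
    moreover have "k + i = (l+1) + (k-j)" using li assms by auto
    moreover have "B - real k = A" "B - real (l+1) = N - 1" unfolding A_def B_def by auto
    ultimately show ?thesis by metis
  qed
  have F3: "ff (real (l+1)) j = (real l + 1) * (real l * ff (real (i + (j-2))) (j-2))"
  proof -
    obtain a where j: "j = Suc (Suc a)" using assms by (metis add_2_eq_Suc le_Suc_ex)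
    have "real l - 1 = real (i + a)" unfolding l_def j by simp
    thus ?thesis unfolding j by (simp add: ff_Suc1 add.commute)
  qed
  have pB1: "ff B (l+1) > 0" unfolding B_def using assms by (intro ff_pos) auto
  have pBk: "ff B k > 0" unfolding B_def using assms by (intro ff_pos) auto
  have fi: "(fact i :: real) > 0" by simp
  have BW: "B = N + 1 + real (i + (j-2))" unfolding B_def l_def using assms by (simp add: of_nat_diff)
  have hA: "ff A i = ff B (l+1) * ff (N-1) (k-j) / ff B k" using F2 pBk by (simp add: field_simps)
  have gen: "(X * Y / Z / f) / (X / (g * f)) = g * Y / Z" if "X > 0" "f > 0" for X Y Z f g :: real
    using that by (simp add: field_simps)
  have R: "(ff A i / fact i) / (ff B (l+1) / fact (l+1)) = ff (real (l+1)) j * ff (N-1) (k-j) / ff B k"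
    unfolding hA F1 using gen[OF pB1 fi] by simp
  have "N * (let l = i + (j - 1) in p l * (((N + real l - real k) gchoose (l + 1 - j)) / ((N + real l) gchoose (l + 1))))
      = N * (p l * ((ff A i / fact i) / (ff B (l+1) / fact (l+1))))"
    unfolding l_def[symmetric] Let_def A_def[symmetric] B_def[symmetric] gchoose_ff li(1)
    by (simp add: A_def B_def)
  also have "\<dots> = (p l * real l * (real l + 1)) * WW k j N i"
    unfolding R WW_def BW[symmetric] F3 by (simp add: algebra_simps)
  finally show ?thesis unfolding l_def .
qed



theorem lemma8:
  fixes p :: "nat \<Rightarrow> real" and b p0 c0 :: real and k j :: nat
  assumes "b > 0" and "p0 > 0"
    and "\<And>l. l \<ge> 1 \<Longrightarrow> p l \<ge> 0"
    and "(\<lambda>l. p (Suc l)) sums 1"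
    and "(\<lambda>l. p l * (real l)\<^sup>2) \<longlonglongrightarrow> p0"
    and "k \<ge> j" and "j \<ge> 2" and "c0 > 0"
  shows "uniform_limit {c0/2..} (\<lambda>K n. Rjn p b k j K n) (\<lambda>n. Rj b p0 k j) at_top"
proof -
  define Cc :: real where "Cc = fact (j-2) * fact (k-j) / fact (k-1)"
  define Q where "Q i = p (i+(j-1)) * real (i+(j-1)) * (real (i+(j-1)) + 1)" for i
  define G where "G N = N * b * (\<Sum>i. (let l = i + (j - 1) in
        p l * (((N + real l - real k) gchoose (l + 1 - j)) / ((N + real l) gchoose (l + 1)))))" for N
  have Qlim: "Q \<longlonglongrightarrow> p0"
  proof -
    have h1: "(\<lambda>i. p (i+(j-1)) * real (i+(j-1))^2) \<longlonglongrightarrow> p0"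
      by (rule LIMSEQ_ignore_initial_segment[OF assms(5)])
    have h2: "(\<lambda>i. 1 + 1 / real (i+(j-1))) \<longlonglongrightarrow> 1 + 0"
      by (intro tendsto_add tendsto_const LIMSEQ_ignore_initial_segment[OF lim_1_over_n])
    have "(\<lambda>i. p (i+(j-1)) * real (i+(j-1))^2 * (1 + 1 / real (i+(j-1)))) \<longlonglongrightarrow> p0 * (1 + 0)"
      by (intro tendsto_mult h1 h2)
    moreover have "p (i+(j-1)) * real (i+(j-1))^2 * (1 + 1 / real (i+(j-1))) = Q i" for i
    proof -
      have "real (i+(j-1)) > 0" using assms by auto
      thus ?thesis unfolding Q_def by (simp add: field_simps power2_eq_square)
    qed
    ultimately show ?thesis by simp
  qed
  obtain M where M: "\<And>i. norm (Q i) \<le> M"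
    using convergent_imp_Bseq[OF convergentI[OF Qlim]] unfolding Bseq_def by auto
  have Geq: "\<forall>\<^sub>F N in at_top. G N = b * (\<Sum>i. Q i * WW k j N i)"
    using eventually_gt_at_top[of "real k"]
  proof eventually_elim
    case (elim N)
    have Ws: "WW k j N sums Cc" unfolding Cc_def using assms elim by (intro WW_sums) auto
    have Wnn: "WW k j N i \<ge> 0" for i using assms elim by (intro WW_nonneg) auto
    have sm: "summable (\<lambda>i. Q i * WW k j N i)"
    proof (rule summable_comparison_test[of _ "\<lambda>i. M * WW k j N i"])
      show "\<exists>N0. \<forall>n\<ge>N0. norm (Q n * WW k j N n) \<le> M * WW k j N n"
        using M Wnn by (auto simp: abs_mult intro!: mult_right_mono)
      show "summable (\<lambda>i. M * WW k j N i)" using Ws by (intro summable_mult sums_summable)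
    qed
    define S where "S = (\<Sum>i. Q i * WW k j N i)"
    have N0: "N > 0" using elim by linarith
    have "(\<lambda>i. Q i * WW k j N i / N) sums (S / N)"
      unfolding S_def by (intro sums_divide summable_sums sm)
    moreover have "Q i * WW k j N i / N = (let l = i + (j - 1) in
        p l * (((N + real l - real k) gchoose (l + 1 - j)) / ((N + real l) gchoose (l + 1))))" for i
      using term_eq[of j k N i p] assms elim N0 unfolding Q_def by (simp add: field_simps)
    ultimately have "(\<lambda>i. (let l = i + (j - 1) in
        p l * (((N + real l - real k) gchoose (l + 1 - j)) / ((N + real l) gchoose (l + 1))))) sums (S / N)"
      by simp
    hence "G N = N * b * (S / N)" unfolding G_def by (simp add: sums_iff)
    thus ?case using N0 unfolding S_def by simp
  qed
  have "((\<lambda>N. \<Sum>i. Q i * WW k j N i) \<longlongrightarrow> p0 * Cc) at_top"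
  proof (rule toeplitz[OF _ _ Qlim])
    show "\<forall>\<^sub>F N in at_top. WW k j N sums Cc \<and> (\<forall>i. 0 \<le> WW k j N i)"
      using eventually_gt_at_top[of "real k"]
      by eventually_elim (use assms WW_sums WW_nonneg in \<open>auto simp: Cc_def\<close>)
    show "((\<lambda>N. WW k j N i) \<longlongrightarrow> 0) at_top" for i using assms by (intro WW_lim) auto
  qed
  hence "((\<lambda>N. b * (\<Sum>i. Q i * WW k j N i)) \<longlongrightarrow> b * (p0 * Cc)) at_top"
    by (rule tendsto_mult_left)
  hence Glim: "(G \<longlongrightarrow> Rj b p0 k j) at_top"
    using tendsto_cong[OF Geq] Rj_value[of j k b p0] assms unfolding Cc_def by (simp add: mult.assoc)
  show ?thesis
    unfolding uniform_limit_iff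
  proof (intro allI impI)
    fix e :: real assume e: "e > 0"
    obtain N0 where N0: "\<And>N. N \<ge> N0 \<Longrightarrow> dist (G N) (Rj b p0 k j) < e"
      using tendstoD[OF Glim e] unfolding eventually_at_top_linorder by blast
    show "\<forall>\<^sub>F K in at_top. \<forall>n\<in>{c0/2..}. dist (Rjn p b k j K n) (Rj b p0 k j) < e"
      using eventually_ge_at_top[of "max (exp 1) (2 * \<bar>N0\<bar> / c0)"]
    proof eventually_elim
      case (elim K)
      show ?case
      proof
        fix n assume n: "n \<in> {c0/2..}"
        have K1: "K \<ge> exp 1" "K \<ge> 2 * \<bar>N0\<bar> / c0" using elim by auto
        have Kpos: "K > 0" using K1 by (meson exp_gt_zero less_le_trans)
        have lnK: "ln K \<ge> 1" using K1 Kpos by (metis ln_exp ln_le_cancel_iff exp_gt_zero)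
        have "K * ln K \<ge> K * 1" using lnK Kpos by (intro mult_left_mono) auto
        moreover have "n \<ge> c0 / 2" using n by auto
        ultimately have "K * ln K * n \<ge> K * (c0 / 2)"
        proof -
          assume a1: "K * ln K \<ge> K * 1" and a2: "n \<ge> c0 / 2"
          have n0: "n \<ge> 0" using a2 assms(8) by linarith
          have "K * ln K * n \<ge> K * n" using a1 n0 by (intro mult_right_mono) auto
          moreover have "K * n \<ge> K * (c0 / 2)" using a2 Kpos by (intro mult_left_mono) auto
          ultimately show ?thesis by linarith
        qed
        moreover have "K * (c0 / 2) \<ge> \<bar>N0\<bar>" using K1 assms(8) by (simp add: field_simps)
        ultimately have "K * ln K * n \<ge> N0" by linarith
        hence "dist (G (K * ln K * n)) (Rj b p0 k j) < e" by (rule N0)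
        thus "dist (Rjn p b k j K n) (Rj b p0 k j) < e" unfolding G_def Rjn_def by simp
      qed
    qed
  qed
qed

end
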